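(* Let $d\ge 3$, let $K$ be an algebraically closed field of characteristic $p$ with $p=0$ or $p>d$, let $X_d\subset\mathbb{P}^3(K)$ be a smooth surface of degree $d$, and let $L\subset X_d$ be a line. Then the set $$\{P\in L:\ \mathbb{T}_PX_d\cap V_P \text{ does not consist of two distinct lines}\}$$ is finite.
   Context: Let $f$ be a homogeneous defining polynomial of $X_d$. For $P=(p_0:\dots:p_3)$ and $j=1,2$ put $\mathfrak t_P^{(j)}(z):=\sum_{0\le i_1,\dots,i_j\le 3}\frac{\partial^j f}{\partial w_{i_1}\cdots\partial w_{i_j}}(p_0,\dots,p_3)\,z_{i_1}\cdots z_{i_j}$. Then $\mathbb{T}_PX_d=V(\mathfrak t_P^{(1)})\subset\mathbb{P}^3$ is the projective tangent plane of $X_d$ at $P$, and $V_P=V(\mathfrak t_P^{(2)})\subset\mathbb{P}^3$ is the Hessian quadric of $X_d$ at $P$; the intersection is taken set-theoretically. *)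

theory Defs
  imports "HOL-Computational_Algebra.Polynomial" "HOL-Library.Numeral_Type"
begin

text \<open>Homogeneous polynomials in the four variables w_0..w_3 are represented by their
coefficient functions on exponent vectors (index type 4).  Points of K^4 are functions
4 => K; points of P^3 are nonzero vectors up to nonzero scalars.\<close>

type_synonym 'a mpoly4 = "(4 \<Rightarrow> nat) \<Rightarrow> 'a"

definition homogeneous4 :: "nat \<Rightarrow> 'a::zero mpoly4 \<Rightarrow> bool" where
  "homogeneous4 d f \<longleftrightarrow> (\<forall>\<alpha>. f \<alpha> \<noteq> 0 \<longrightarrow> (\<Sum>i\<in>UNIV. \<alpha> i) = d)"

definition eval4 :: "'a::comm_semiring_1 mpoly4 \<Rightarrow> (4 \<Rightarrow> 'a) \<Rightarrow> 'a" where
  "eval4 f x = (\<Sum>\<alpha>\<in>{\<alpha>. f \<alpha> \<noteq> 0}. f \<alpha> * (\<Prod>i\<in>UNIV. x i ^ \<alpha> i))"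

definition pderiv4 :: "4 \<Rightarrow> 'a::comm_semiring_1 mpoly4 \<Rightarrow> 'a mpoly4" where
  "pderiv4 i f = (\<lambda>\<alpha>. of_nat (\<alpha> i + 1) * f (\<alpha>(i := \<alpha> i + 1)))"

definition tangent_form :: "'a::comm_semiring_1 mpoly4 \<Rightarrow> (4 \<Rightarrow> 'a) \<Rightarrow> (4 \<Rightarrow> 'a) \<Rightarrow> 'a" where
  "tangent_form f P z = (\<Sum>i\<in>UNIV. eval4 (pderiv4 i f) P * z i)"

definition hessian_form :: "'a::comm_semiring_1 mpoly4 \<Rightarrow> (4 \<Rightarrow> 'a) \<Rightarrow> (4 \<Rightarrow> 'a) \<Rightarrow> 'a" where
  "hessian_form f P z =
     (\<Sum>i\<in>UNIV. \<Sum>j\<in>UNIV. eval4 (pderiv4 j (pderiv4 i f)) P * z i * z j)"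

definition nonzero4 :: "(4 \<Rightarrow> 'a::zero) \<Rightarrow> bool" where
  "nonzero4 v \<longleftrightarrow> (\<exists>i. v i \<noteq> 0)"

definition proj_pt :: "(4 \<Rightarrow> 'a::field) \<Rightarrow> (4 \<Rightarrow> 'a) set" where
  "proj_pt v = {(\<lambda>i. c * v i) | c. c \<noteq> 0}"

definition lin_indep2 :: "(4 \<Rightarrow> 'a::field) \<Rightarrow> (4 \<Rightarrow> 'a) \<Rightarrow> bool" where
  "lin_indep2 a b \<longleftrightarrow> (\<forall>s t. (\<forall>i. s * a i + t * b i = 0) \<longrightarrow> s = 0 \<and> t = 0)"

definition line_cone :: "(4 \<Rightarrow> 'a::field) \<Rightarrow> (4 \<Rightarrow> 'a) \<Rightarrow> (4 \<Rightarrow> 'a) set" where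
  "line_cone a b = {z. nonzero4 z \<and> (\<exists>s t. z = (\<lambda>i. s * a i + t * b i))}"

definition smooth_surface :: "'a::field mpoly4 \<Rightarrow> bool" where
  "smooth_surface f \<longleftrightarrow>
     (\<forall>P. nonzero4 P \<and> eval4 f P = 0 \<longrightarrow> (\<exists>i. eval4 (pderiv4 i f) P \<noteq> 0))"

text \<open>T_P X \<inter> V_P (as a subset of P^3, via its cone) consists of two distinct lines.\<close>
definition two_distinct_lines :: "'a::field mpoly4 \<Rightarrow> (4 \<Rightarrow> 'a) \<Rightarrow> bool" where
  "two_distinct_lines f P \<longleftrightarrow>
     (\<exists>a1 b1 a2 b2. lin_indep2 a1 b1 \<and> lin_indep2 a2 b2 \<and>
        line_cone a1 b1 \<noteq> line_cone a2 b2 \<and>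
        {z. nonzero4 z \<and> tangent_form f P z = 0 \<and> hessian_form f P z = 0}
          = line_cone a1 b1 \<union> line_cone a2 b2)"

end

theory Submission
  imports Defs "HOL-Analysis.Analysis"
begin


definition Pm :: "(4 \<Rightarrow> 'a::comm_semiring_1) \<Rightarrow> (4 \<Rightarrow> 'a) \<Rightarrow> (4 \<Rightarrow> nat) \<Rightarrow> 'a poly" where
  "Pm u v \<alpha> = (\<Prod>i\<in>UNIV. [:u i, v i:] ^ \<alpha> i)"

definition Lp :: "(4 \<Rightarrow> 'a::comm_semiring_1) \<Rightarrow> (4 \<Rightarrow> 'a) \<Rightarrow> 'a mpoly4 \<Rightarrow> 'a poly" where
  "Lp u v g = (\<Sum>\<alpha>\<in>{\<alpha>. g \<alpha> \<noteq> 0}. smult (g \<alpha>) (Pm u v \<alpha>))"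

lemma sum_upd4: "(\<Sum>j\<in>UNIV. ((\<alpha>::4\<Rightarrow>nat)(i := x)) j) = (\<Sum>j\<in>UNIV. \<alpha> j) - \<alpha> i + x"
proof -
  have "(\<Sum>j\<in>UNIV. ((\<alpha>::4\<Rightarrow>nat)(i := x)) j) = x + (\<Sum>j\<in>UNIV-{i}. \<alpha> j)"
    by (simp add: sum.remove[of UNIV i])
  moreover have "(\<Sum>j\<in>UNIV. \<alpha> j) = \<alpha> i + (\<Sum>j\<in>UNIV-{i}. \<alpha> j)"
    by (simp add: sum.remove[of UNIV i])
  ultimately show ?thesis by simp
qed

lemma fin_homog:
  assumes "homogeneous4 m g" shows "finite {\<alpha>. g \<alpha> \<noteq> 0}"
proof (rule finite_subset)
  show "{\<alpha>. g \<alpha> \<noteq> 0} \<subseteq> PiE UNIV (\<lambda>_. {..m})"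
  proof
    fix \<alpha> assume "\<alpha> \<in> {\<alpha>. g \<alpha> \<noteq> 0}"
    then have "(\<Sum>i\<in>UNIV. \<alpha> i) = m" using assms by (auto simp: homogeneous4_def)
    moreover have "\<alpha> i \<le> (\<Sum>i\<in>UNIV. \<alpha> i)" for i by (rule member_le_sum) auto
    ultimately have "\<forall>i. \<alpha> i \<le> m" by auto
    then show "\<alpha> \<in> PiE UNIV (\<lambda>_. {..m})" by (auto simp: PiE_iff)
  qed
  show "finite (PiE UNIV (\<lambda>_. {..m}) :: (4\<Rightarrow>nat) set)" by (intro finite_PiE) auto
qed

lemma homog_D:
  assumes "homogeneous4 m g" shows "homogeneous4 (m - 1) (pderiv4 i g)"
  unfolding homogeneous4_def
proof (intro allI impI)
  fix \<alpha> assume "pderiv4 i g \<alpha> \<noteq> 0"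
  then have "g (\<alpha>(i := \<alpha> i + 1)) \<noteq> 0" by (auto simp: pderiv4_def)
  then have "(\<Sum>j\<in>UNIV. (\<alpha>(i := \<alpha> i + 1)) j) = m" using assms by (auto simp: homogeneous4_def)
  moreover have "\<alpha> i \<le> (\<Sum>j\<in>UNIV. \<alpha> j)" by (rule member_le_sum) auto
  ultimately show "(\<Sum>j\<in>UNIV. \<alpha> j) = m - 1" by (simp only: sum_upd4)
qed

lemma Lp_superset:
  assumes "finite S" "{\<alpha>. g \<alpha> \<noteq> 0} \<subseteq> S"
  shows "Lp u v g = (\<Sum>\<alpha>\<in>S. smult (g \<alpha>) (Pm u v \<alpha>))"
  unfolding Lp_def by (rule sum.mono_neutral_left) (use assms in auto)

lemma poly_Lp:
  assumes "finite {\<alpha>. g \<alpha> \<noteq> 0}"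
  shows "poly (Lp u v g) x = eval4 g (\<lambda>i. u i + x * v i)"
  unfolding Lp_def eval4_def Pm_def by (simp add: poly_sum poly_prod algebra_simps)

lemma Lp_D:
  assumes fin: "finite {\<alpha>. g \<alpha> \<noteq> 0}"
  shows "Lp u v (pderiv4 i g) =
    (\<Sum>\<alpha>\<in>{\<alpha>. g \<alpha> \<noteq> 0}. smult (g \<alpha> * of_nat (\<alpha> i)) (Pm u v (\<alpha>(i := \<alpha> i - 1))))"
proof -
  define S where "S = {\<alpha>. g \<alpha> \<noteq> 0 \<and> \<alpha> i \<ge> 1}"
  define h where "h = (\<lambda>\<alpha>::4\<Rightarrow>nat. \<alpha>(i := \<alpha> i - 1))"
  have finS: "finite S" using fin by (rule rev_finite_subset) (auto simp: S_def)
  have inj: "inj_on h S"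
  proof
    fix x y assume "x \<in> S" "y \<in> S" "h x = h y"
    then show "x = y" unfolding S_def h_def
      by (metis (no_types, lifting) fun_upd_eqD fun_upd_idem_iff fun_upd_upd le_add_diff_inverse2 mem_Collect_eq)
  qed
  have sub: "{\<beta>. pderiv4 i g \<beta> \<noteq> 0} \<subseteq> h ` S"
  proof
    fix \<beta> assume "\<beta> \<in> {\<beta>. pderiv4 i g \<beta> \<noteq> 0}"
    then have "g (\<beta>(i := \<beta> i + 1)) \<noteq> 0" by (auto simp: pderiv4_def)
    then have "\<beta>(i := \<beta> i + 1) \<in> S" by (auto simp: S_def)
    moreover have "h (\<beta>(i := \<beta> i + 1)) = \<beta>" by (auto simp: h_def)
    ultimately show "\<beta> \<in> h ` S" by (metis imageI)
  qed
  have "Lp u v (pderiv4 i g) = (\<Sum>\<beta>\<in>h ` S. smult (pderiv4 i g \<beta>) (Pm u v \<beta>))"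
    by (rule Lp_superset) (use finS sub in auto)
  also have "\<dots> = (\<Sum>\<alpha>\<in>S. smult (pderiv4 i g (h \<alpha>)) (Pm u v (h \<alpha>)))"
    by (rule sum.reindex[OF inj, unfolded comp_def])
  also have "\<dots> = (\<Sum>\<alpha>\<in>S. smult (g \<alpha> * of_nat (\<alpha> i)) (Pm u v (\<alpha>(i := \<alpha> i - 1))))"
  proof (rule sum.cong[OF refl])
    fix \<alpha> assume "\<alpha> \<in> S"
    then have "\<alpha> i \<ge> 1" by (auto simp: S_def)
    then have "(h \<alpha>)(i := h \<alpha> i + 1) = \<alpha>" "h \<alpha> i + 1 = \<alpha> i" by (auto simp: h_def)
    then show "smult (pderiv4 i g (h \<alpha>)) (Pm u v (h \<alpha>)) = smult (g \<alpha> * of_nat (\<alpha> i)) (Pm u v (\<alpha>(i := \<alpha> i - 1)))"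
      by (simp add: pderiv4_def h_def mult.commute) (metis of_nat_Suc add.commute)
  qed
  also have "\<dots> = (\<Sum>\<alpha>\<in>{\<alpha>. g \<alpha> \<noteq> 0}. smult (g \<alpha> * of_nat (\<alpha> i)) (Pm u v (\<alpha>(i := \<alpha> i - 1))))"
    apply (rule sum.mono_neutral_left)
    apply (use fin in \<open>auto simp: S_def\<close>)
    apply (rule ccontr)
    apply (simp add: not_less_eq_eq)
    done
  finally show ?thesis .
qed

lemma pderiv_Pm:
  "pderiv (Pm u v \<alpha>) = (\<Sum>i\<in>UNIV. smult (v i * of_nat (\<alpha> i)) (Pm u v (\<alpha>(i := \<alpha> i - 1))))"
proof -
  have "pderiv (Pm u v \<alpha>) = (\<Sum>i\<in>UNIV. (\<Prod>j\<in>UNIV-{i}. [:u j, v j:] ^ \<alpha> j) * pderiv ([:u i, v i:] ^ \<alpha> i))"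
    unfolding Pm_def by (rule pderiv_prod)
  also have "\<dots> = (\<Sum>i\<in>UNIV. smult (v i * of_nat (\<alpha> i)) (Pm u v (\<alpha>(i := \<alpha> i - 1))))"
  proof (rule sum.cong[OF refl])
    fix i
    have "Pm u v (\<alpha>(i := \<alpha> i - 1)) = [:u i, v i:] ^ (\<alpha> i - 1) * (\<Prod>j\<in>UNIV-{i}. [:u j, v j:] ^ \<alpha> j)"
      unfolding Pm_def by (subst prod.remove[of UNIV i]) (auto intro!: prod.cong)
    then show "(\<Prod>j\<in>UNIV-{i}. [:u j, v j:] ^ \<alpha> j) * pderiv ([:u i, v i:] ^ \<alpha> i) =
      smult (v i * of_nat (\<alpha> i)) (Pm u v (\<alpha>(i := \<alpha> i - 1)))"
      by (simp add: pderiv_power pderiv_pCons algebra_simps)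
  qed
  finally show ?thesis .
qed

lemma smult_sum_right: "smult a (sum f S) = (\<Sum>x\<in>S. smult a (f x))"
  by (induction S rule: infinite_finite_induct) (auto simp: smult_add_right)

lemma pderiv_sum': "pderiv (sum f S) = (\<Sum>x\<in>S. pderiv (f x))"
  by (induction S rule: infinite_finite_induct) (auto simp: pderiv_add)

lemma pderiv_Lp:
  assumes fin: "finite {\<alpha>. g \<alpha> \<noteq> 0}"
  shows "pderiv (Lp u v g) = (\<Sum>i\<in>UNIV. smult (v i) (Lp u v (pderiv4 i g)))"
proof -
  have "pderiv (Lp u v g) = (\<Sum>\<alpha>\<in>{\<alpha>. g \<alpha> \<noteq> 0}. smult (g \<alpha>) (pderiv (Pm u v \<alpha>)))"
    unfolding Lp_def by (simp add: pderiv_sum' pderiv_smult)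
  also have "\<dots> = (\<Sum>\<alpha>\<in>{\<alpha>. g \<alpha> \<noteq> 0}. \<Sum>i\<in>UNIV. smult (v i) (smult (g \<alpha> * of_nat (\<alpha> i)) (Pm u v (\<alpha>(i := \<alpha> i - 1)))))"
    by (simp add: pderiv_Pm smult_sum_right mult_ac)
  also have "\<dots> = (\<Sum>i\<in>UNIV. smult (v i) (Lp u v (pderiv4 i g)))"
    by (subst sum.swap) (simp add: Lp_D[OF fin] smult_sum_right mult_ac)
  finally show ?thesis .
qed

lemma prod_monom: "(\<Prod>i\<in>S. monom (c i) (k i)) = monom (prod c S) (sum k S)"
  by (induction S rule: infinite_finite_induct) (auto simp: mult_monom)

lemma Lp_zero_homog:
  assumes h: "homogeneous4 m g"
  shows "Lp (\<lambda>_. 0) z g = monom (eval4 g z) m"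
proof -
  have "Pm (\<lambda>_. 0) z \<alpha> = monom (\<Prod>i\<in>UNIV. z i ^ \<alpha> i) (\<Sum>i\<in>UNIV. \<alpha> i)" for \<alpha>
  proof -
    have "[:0, z i:] ^ \<alpha> i = monom (z i ^ \<alpha> i) (\<alpha> i)" for i
    proof -
      have "[:0, z i:] = monom (z i) 1" by (simp add: monom_Suc monom_0)
      then show ?thesis by (simp add: monom_power)
    qed
    then show ?thesis unfolding Pm_def by (simp add: prod_monom)
  qed
  then have "Lp (\<lambda>_. 0) z g = (\<Sum>\<alpha>\<in>{\<alpha>. g \<alpha> \<noteq> 0}. monom (g \<alpha> * (\<Prod>i\<in>UNIV. z i ^ \<alpha> i)) m)"
    unfolding Lp_def using h by (auto simp: smult_monom homogeneous4_def intro!: sum.cong)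
  also have "\<dots> = monom (eval4 g z) m" by (simp add: eval4_def monom_sum)
  finally show ?thesis .
qed

lemma eval_scale:
  assumes h: "homogeneous4 m g"
  shows "eval4 g (\<lambda>i. c * z i) = c ^ m * eval4 g z"
proof -
  have "eval4 g (\<lambda>i. c * z i) = poly (Lp (\<lambda>_. 0) z g) c"
    by (simp add: poly_Lp[OF fin_homog[OF h]])
  also have "\<dots> = c ^ m * eval4 g z" by (simp add: Lp_zero_homog[OF h] poly_monom mult.commute)
  finally show ?thesis .
qed

lemma euler:
  fixes g :: "'a::field mpoly4"
  assumes h: "homogeneous4 m g"
  shows "(\<Sum>i\<in>UNIV. z i * eval4 (pderiv4 i g) z) = of_nat m * eval4 g z"
proof -
  have fD: "finite {\<alpha>. pderiv4 i g \<alpha> \<noteq> 0}" for i by (rule fin_homog[OF homog_D[OF h]])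
  have "of_nat m * eval4 g z = poly (pderiv (Lp (\<lambda>_. 0) z g)) 1"
    by (simp add: Lp_zero_homog[OF h] pderiv_monom poly_monom)
  also have "\<dots> = (\<Sum>i\<in>UNIV. z i * eval4 (pderiv4 i g) z)"
    by (simp add: pderiv_Lp[OF fin_homog[OF h]] poly_sum poly_Lp[OF fD])
  finally show ?thesis by simp
qed

lemma D_comm: "pderiv4 j (pderiv4 i g) = pderiv4 i (pderiv4 j g)"
  by (cases "i = j") (auto simp: pderiv4_def fun_upd_twist mult_ac intro!: ext)

lemma coeff_mult_le:
  fixes p q :: "'a::comm_semiring_1 poly"
  assumes "degree p \<le> m" "degree q \<le> n"
  shows "coeff (p * q) (m + n) = coeff p m * coeff q n"
proof -
  have "coeff (p * q) (m + n) = (\<Sum>i\<le>m+n. coeff p i * coeff q (m + n - i))"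
    by (rule coeff_mult)
  also have "\<dots> = coeff p m * coeff q (m + n - m) + (\<Sum>i\<in>{..m+n}-{m}. coeff p i * coeff q (m + n - i))"
    by (subst sum.remove[of _ m]) auto
  moreover have "(\<Sum>i\<in>{..m+n}-{m}. coeff p i * coeff q (m + n - i)) = 0"
  proof (intro sum.neutral ballI)
    fix i assume "i \<in> {..m+n}-{m}"
    then have "i < m \<or> i > m" by auto
    then show "coeff p i * coeff q (m + n - i) = 0"
    proof
      assume "i < m" then have "coeff q (m + n - i) = 0" using assms by (intro coeff_eq_0) auto
      then show ?thesis by simp
    next
      assume "i > m" then have "coeff p i = 0" using assms by (intro coeff_eq_0) auto
      then show ?thesis by simp
    qed
  qed
  ultimately show ?thesis by simp
qed

lemma lin_power_coeff:
  fixes u v :: "'a::comm_semiring_1"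
  shows "degree ([:u, v:] ^ k) \<le> k \<and> coeff ([:u, v:] ^ k) k = v ^ k"
proof (induction k)
  case 0 then show ?case by simp
next
  case (Suc k)
  have d1: "degree [:u, v:] \<le> 1" by simp
  have "degree ([:u, v:] ^ Suc k) \<le> Suc k"
    using degree_mult_le[of "[:u, v:]" "[:u, v:] ^ k"] Suc d1 by simp
  moreover have "coeff ([:u, v:] ^ Suc k) (Suc k) = v ^ Suc k"
    using coeff_mult_le[OF d1, of "[:u, v:] ^ k" k] Suc by simp
  ultimately show ?case by simp
qed

lemma prod_coeff_le:
  fixes p :: "'b \<Rightarrow> 'a::comm_semiring_1 poly"
  assumes "finite S" "\<And>i. i \<in> S \<Longrightarrow> degree (p i) \<le> k i"
  shows "degree (prod p S) \<le> sum k S \<and> coeff (prod p S) (sum k S) = (\<Prod>i\<in>S. coeff (p i) (k i))"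
  using assms
proof (induction S rule: finite_induct)
  case empty then show ?case by simp
next
  case (insert x F)
  then have IH: "degree (prod p F) \<le> sum k F" "coeff (prod p F) (sum k F) = (\<Prod>i\<in>F. coeff (p i) (k i))"
    by auto
  have dx: "degree (p x) \<le> k x" using insert by auto
  have "degree (prod p (insert x F)) \<le> sum k (insert x F)"
    using insert degree_mult_le[of "p x" "prod p F"] IH dx by (simp add: add_le_mono order_trans)
  moreover have "coeff (prod p (insert x F)) (sum k (insert x F)) = (\<Prod>i\<in>insert x F. coeff (p i) (k i))"
    using insert coeff_mult_le[OF dx IH(1)] IH(2) by simp
  ultimately show ?case by simp
qed

lemma Pm_coeff:
  "degree (Pm u v \<alpha>) \<le> (\<Sum>i\<in>UNIV. \<alpha> i) \<and> coeff (Pm u v \<alpha>) (\<Sum>i\<in>UNIV. \<alpha> i) = (\<Prod>i\<in>UNIV. v i ^ \<alpha> i)"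
  unfolding Pm_def using prod_coeff_le[of UNIV "\<lambda>i. [:u i, v i:] ^ \<alpha> i" \<alpha>] lin_power_coeff by auto

lemma Lp_coeff:
  assumes h: "homogeneous4 m g"
  shows "degree (Lp u v g) \<le> m \<and> coeff (Lp u v g) m = eval4 g v"
proof
  show "degree (Lp u v g) \<le> m" unfolding Lp_def
  proof (rule degree_sum_le[OF fin_homog[OF h]])
    fix \<alpha> assume "\<alpha> \<in> {\<alpha>. g \<alpha> \<noteq> 0}"
    then have "(\<Sum>i\<in>UNIV. \<alpha> i) = m" using h by (auto simp: homogeneous4_def)
    then show "degree (smult (g \<alpha>) (Pm u v \<alpha>)) \<le> m" using Pm_coeff[of u v \<alpha>] degree_smult_le
      by (metis order_trans)
  qed
  have "coeff (Lp u v g) m = (\<Sum>\<alpha>\<in>{\<alpha>. g \<alpha> \<noteq> 0}. g \<alpha> * coeff (Pm u v \<alpha>) m)"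
    by (simp add: Lp_def coeff_sum)
  also have "\<dots> = eval4 g v" unfolding eval4_def
  proof (rule sum.cong[OF refl])
    fix \<alpha> assume "\<alpha> \<in> {\<alpha>. g \<alpha> \<noteq> 0}"
    then have "(\<Sum>i\<in>UNIV. \<alpha> i) = m" using h by (auto simp: homogeneous4_def)
    then show "g \<alpha> * coeff (Pm u v \<alpha>) m = g \<alpha> * (\<Prod>i\<in>UNIV. v i ^ \<alpha> i)" using Pm_coeff[of u v \<alpha>] by simp
  qed
  finally show "coeff (Lp u v g) m = eval4 g v" .
qed



lemma degree_pderiv_le: "degree (pderiv p) \<le> degree p - 1"
  by (rule degree_le) (auto simp: coeff_pderiv coeff_eq_0)

lemma of_nat_inj_char:
  assumes "CHAR('a::field) = 0 \<or> m < CHAR('a)" "u \<le> m" "v \<le> m" "(of_nat u :: 'a) = of_nat v"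
  shows "u = v"
proof (rule ccontr)
  assume ne: "u \<noteq> v"
  have key: "of_nat k \<noteq> (0::'a)" if "0 < k" "k \<le> m" for k
  proof
    assume "of_nat k = (0::'a)"
    then have "CHAR('a) dvd k" by (simp add: of_nat_eq_0_iff_char_dvd)
    show False
    proof (cases "CHAR('a) = 0")
      case True then show False using \<open>CHAR('a) dvd k\<close> that(1) by simp
    next
      case False
      then have "CHAR('a) \<le> k" using \<open>CHAR('a) dvd k\<close> that(1) by (intro dvd_imp_le) auto
      then show False using False assms(1) that(2) by linarith
    qed
  qed
  show False
  proof (cases "u < v")
    case True
    then have "(of_nat (v - u) :: 'a) = of_nat v - of_nat u" by (intro of_nat_diff) simp
    moreover have "(of_nat (v - u) :: 'a) \<noteq> 0" using key[of "v - u"] True assms(3) by simp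
    ultimately show False using assms(4) by simp
  next
    case False
    then have "(of_nat (u - v) :: 'a) = of_nat u - of_nat v" by (intro of_nat_diff) simp
    moreover have "(of_nat (u - v) :: 'a) \<noteq> 0" using key[of "u - v"] False ne assms(2) by simp
    ultimately show False using assms(4) by simp
  qed
qed

lemma coeff_q_pderiv_r:
  fixes q r :: "'a::field poly"
  assumes "1 \<le> degree r + degree q"
  shows "coeff (q * pderiv r) (degree r + degree q - 1) = of_nat (degree r) * coeff r (degree r) * coeff q (degree q)"
proof (cases "degree r = 0")
  case True
  then have "pderiv r = 0" by (metis degree_eq_zeroE pderiv.simps pderiv_0 pderiv_singleton)
  then show ?thesis using True by simp
next
  case False
  have "coeff (q * pderiv r) (degree q + (degree r - 1)) = coeff q (degree q) * coeff (pderiv r) (degree r - 1)"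
    by (rule coeff_mult_le) (use degree_pderiv_le[of r] in auto)
  moreover have "degree q + (degree r - 1) = degree r + degree q - 1" using False by simp
  moreover have "coeff (pderiv r) (degree r - 1) = of_nat (degree r) * coeff r (degree r)"
    using False by (simp add: coeff_pderiv)
  ultimately show ?thesis by (simp add: mult_ac)
qed

lemma wronsk_dep:
  fixes p q :: "'a::field poly"
  assumes dp: "degree p \<le> m" and dq: "degree q \<le> m" and ch: "CHAR('a) = 0 \<or> m < CHAR('a)"
    and W: "q * pderiv p - p * pderiv q = 0" and q0: "q \<noteq> 0"
  shows "\<exists>c. p = smult c q"
proof -
  define v where "v = degree q"
  define r where "r = smult (coeff q v) p - smult (coeff p v) q"
  have qv: "coeff q v \<noteq> 0" using q0 by (simp add: v_def)
  have rv: "coeff r v = 0" by (simp add: r_def)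
  have Wr: "q * pderiv r - r * pderiv q = 0"
  proof -
    have "q * pderiv r - r * pderiv q = smult (coeff q v) (q * pderiv p - p * pderiv q)"
      by (simp add: r_def pderiv_diff pderiv_smult algebra_simps smult_diff_right)
    then show ?thesis using W by simp
  qed
  have "r = 0"
  proof (rule ccontr)
    assume r0: "r \<noteq> 0"
    define u where "u = degree r"
    have ru: "coeff r u \<noteq> 0" using r0 by (simp add: u_def)
    have uv: "u \<noteq> v" using ru rv by auto
    have "degree (smult (coeff q v) p) \<le> m" using dp degree_smult_le order_trans by blast
    moreover have "degree (smult (coeff p v) q) \<le> m" using dq degree_smult_le order_trans by blast
    ultimately have du: "u \<le> m" unfolding u_def r_def by (rule degree_diff_le)
    have dv: "v \<le> m" using dq by (simp add: v_def)
    have pos: "1 \<le> u + v" using uv by simp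
    have c1: "coeff (q * pderiv r) (u + v - 1) = of_nat u * coeff r u * coeff q v"
      using coeff_q_pderiv_r[of r q] pos by (simp add: u_def v_def)
    have c2: "coeff (r * pderiv q) (u + v - 1) = of_nat v * coeff q v * coeff r u"
      using coeff_q_pderiv_r[of q r] pos by (simp add: u_def v_def add.commute)
    have "coeff (q * pderiv r - r * pderiv q) (u + v - 1) = 0" using Wr by simp
    then have "(of_nat u - of_nat v) * (coeff r u * coeff q v) = (0::'a)"
      using c1 c2 by (simp add: algebra_simps)
    then have "(of_nat u :: 'a) = of_nat v" using ru qv by simp
    then have "u = v" using of_nat_inj_char[OF ch du dv] by simp
    with uv show False by simp
  qed
  then have "smult (coeff q v) p = smult (coeff p v) q" by (simp add: r_def)
  then have "smult (inverse (coeff q v)) (smult (coeff q v) p) = smult (inverse (coeff q v)) (smult (coeff p v) q)"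
    by simp
  then have "p = smult (inverse (coeff q v) * coeff p v) q"
    using qv by (simp only: smult_smult) simp
  then show ?thesis by blast
qed



lemma ker3:
  fixes g a b n z :: "4 \<Rightarrow> 'a::field"
  assumes gk: "g k \<noteq> 0"
    and Ta: "(\<Sum>i\<in>UNIV. g i * a i) = 0" and Tb: "(\<Sum>i\<in>UNIV. g i * b i) = 0"
    and Tn: "(\<Sum>i\<in>UNIV. g i * n i) = 0" and Tz: "(\<Sum>i\<in>UNIV. g i * z i) = 0"
    and ind: "\<forall>\<alpha> \<beta> \<gamma>. (\<forall>i. \<alpha> * a i + \<beta> * b i + \<gamma> * n i = 0) \<longrightarrow> \<alpha> = 0 \<and> \<beta> = 0 \<and> \<gamma> = 0"
  shows "\<exists>\<alpha> \<beta> \<gamma>. z = (\<lambda>i. \<alpha> * a i + \<beta> * b i + \<gamma> * n i)"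
proof -
  define A where "A = (\<chi> i. a i)"
  define B where "B = (\<chi> i. b i)"
  define N where "N = (\<chi> i. n i)"
  define Z where "Z = (\<chi> i. z i)"
  define V where "V = {x::'a^4. (\<Sum>i\<in>UNIV. g i * x$i) = 0}"
  have subV: "vec.subspace V" unfolding vec.subspace_def V_def
    by (auto simp: distrib_left sum.distrib mult.left_commute[of "g _"] simp flip: sum_distrib_left)
  have "axis k 1 \<notin> V" using gk by (simp add: V_def axis_def if_distrib cong: if_cong)
  moreover have "vec.span V = V" using subV by (simp add: vec.span_eq_iff)
  ultimately have "vec.span V \<noteq> UNIV" by (metis UNIV_I)
  then have "vec.dim V < vec.dim (UNIV :: ('a^4) set)"
    by (intro vec.dim_psubset) (auto simp: vec.span_UNIV)
  then have dimV: "vec.dim V \<le> 3" by (simp add: card_cart_basis)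
  have AV: "A \<in> V" "B \<in> V" "N \<in> V" "Z \<in> V" using Ta Tb Tn Tz by (auto simp: V_def A_def B_def N_def Z_def)
  have N0: "N \<noteq> 0"
  proof
    assume "N = 0" then have "\<forall>i. 0 * a i + 0 * b i + 1 * n i = 0" by (auto simp: N_def vec_eq_iff)
    then show False using ind[rule_format, of 0 0 1] by simp
  qed
  have BN: "B \<notin> vec.span {N}"
  proof
    assume "B \<in> vec.span {N}"
    then obtain c where "B = c *s N" by (auto simp: vec.span_singleton)
    then have "\<forall>i. 0 * a i + 1 * b i + (- c) * n i = 0" by (auto simp: B_def N_def vec_eq_iff)
    then show False using ind[rule_format, of 0 1 "- c"] by simp
  qed
  have ABN: "A \<notin> vec.span {B, N}"
  proof
    assume "A \<in> vec.span {B, N}"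
    then obtain c1 where "A - c1 *s B \<in> vec.span {N}" by (auto simp: vec.span_breakdown_eq)
    then obtain c2 where "A - c1 *s B = c2 *s N" by (auto simp: vec.span_singleton)
    then have "\<forall>i. 1 * a i + (- c1) * b i + (- c2) * n i = 0"
      by (auto simp: A_def B_def N_def vec_eq_iff algebra_simps)
    then show False using ind[rule_format, of 1 "- c1" "- c2"] by simp
  qed
  have i1: "vec.independent {N}"
    by (rule vec.independent_insertI) (use N0 in \<open>auto simp: vec.independent_empty\<close>)
  have i2: "vec.independent {B, N}" by (rule vec.independent_insertI[OF BN i1])
  have indep: "vec.independent {A, B, N}" by (rule vec.independent_insertI[OF ABN i2])
  have "Z \<in> vec.span {A, B, N}"
  proof (rule ccontr)
    assume Zn: "Z \<notin> vec.span {A, B, N}"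
    then have i4: "vec.independent (insert Z {A, B, N})" using indep by (rule vec.independent_insertI)
    have "B \<noteq> N" using BN vec.span_base[of N "{N}"] by auto
    moreover have "A \<noteq> B" "A \<noteq> N" using ABN vec.span_base[of B "{B,N}"] vec.span_base[of N "{B,N}"] by auto
    moreover have "Z \<noteq> A" "Z \<noteq> B" "Z \<noteq> N" using Zn vec.span_base[of _ "{A,B,N}"] by auto
    ultimately have "card (insert Z {A, B, N}) = 4" by simp
    moreover have "card (insert Z {A, B, N}) \<le> vec.dim V"
      by (rule vec.independent_card_le_dim) (use AV i4 in auto)
    ultimately show False using dimV by simp
  qed
  then obtain c1 where "Z - c1 *s A \<in> vec.span {B, N}" by (auto simp: vec.span_breakdown_eq)
  then obtain c2 where "Z - c1 *s A - c2 *s B \<in> vec.span {N}" by (auto simp: vec.span_breakdown_eq)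
  then obtain c3 where "Z - c1 *s A - c2 *s B = c3 *s N" by (auto simp: vec.span_singleton)
  then have "\<forall>i. z i = c1 * a i + c2 * b i + c3 * n i"
    by (auto simp: A_def B_def N_def Z_def vec_eq_iff algebra_simps)
  then show ?thesis by blast
qed



definition Tf :: "(4 \<Rightarrow> 'a::field) \<Rightarrow> (4 \<Rightarrow> 'a) \<Rightarrow> 'a" where
  "Tf g z = (\<Sum>i\<in>UNIV. g i * z i)"

definition Bf :: "(4 \<Rightarrow> 4 \<Rightarrow> 'a::field) \<Rightarrow> (4 \<Rightarrow> 'a) \<Rightarrow> (4 \<Rightarrow> 'a) \<Rightarrow> 'a" where
  "Bf H u v = (\<Sum>i\<in>UNIV. \<Sum>j\<in>UNIV. H i j * u i * v j)"

lemma Tf_lin: "Tf g (\<lambda>i. s * u i + t * w i) = s * Tf g u + t * Tf g w"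
  by (simp add: Tf_def algebra_simps sum.distrib sum_distrib_left)

lemma Bf_lin1: "Bf H (\<lambda>i. s * u i + t * w i) v = s * Bf H u v + t * Bf H w v"
  by (simp add: Bf_def algebra_simps sum.distrib sum_distrib_left)

lemma Bf_lin2: "Bf H u (\<lambda>i. s * v i + t * w i) = s * Bf H u v + t * Bf H u w"
  by (simp add: Bf_def algebra_simps sum.distrib sum_distrib_left)

lemma Bf_sym: assumes "\<And>i j. H i j = H j i" shows "Bf H u v = Bf H v u"
  unfolding Bf_def by (subst sum.swap) (simp add: assms mult_ac)

lemma Bf_quad:
  assumes "\<And>i j. H i j = H j i"
  shows "Bf H (\<lambda>i. s * u i + t * w i) (\<lambda>i. s * u i + t * w i)
     = s * s * Bf H u u + 2 * s * t * Bf H u w + t * t * Bf H w w"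
  using Bf_sym[of H u w, OF assms]
  by (simp add: Bf_lin1 Bf_lin2 algebra_simps)

lemma two_lines_LA:
  fixes g :: "4 \<Rightarrow> 'a::field" and H :: "4 \<Rightarrow> 4 \<Rightarrow> 'a" and a b n :: "4 \<Rightarrow> 'a"
  assumes two: "(2::'a) \<noteq> 0"
    and gk: "g k \<noteq> 0"
    and Hs: "\<And>i j. H i j = H j i"
    and ab: "lin_indep2 a b"
    and Ta: "Tf g a = 0" and Tb: "Tf g b = 0"
    and Baa: "Bf H a a = 0" and Bab: "Bf H a b = 0" and Bbb: "Bf H b b = 0"
    and Tn: "Tf g n = 0" and Bbn: "Bf H b n \<noteq> 0"
    and BP: "\<And>v. Bf H (\<lambda>i. a i + x * b i) v = c * Tf g v"
  shows "\<exists>a1 b1 a2 b2. lin_indep2 a1 b1 \<and> lin_indep2 a2 b2 \<and> line_cone a1 b1 \<noteq> line_cone a2 b2 \<and>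
        {z. nonzero4 z \<and> Tf g z = 0 \<and> Bf H z z = 0} = line_cone a1 b1 \<union> line_cone a2 b2"
proof -
  define \<beta>0 where "\<beta>0 = Bf H b n"
  define \<nu> where "\<nu> = Bf H n n"
  define P where "P = (\<lambda>i. a i + x * b i)"
  define m where "m = (\<lambda>i. (2 * \<beta>0) * n i + (- \<nu>) * b i)"
  have b0: "\<beta>0 \<noteq> 0" using Bbn by (simp add: \<beta>0_def)
  have Bsym: "Bf H u v = Bf H v u" for u v by (rule Bf_sym[OF Hs])
  have Bzero: "Bf H u (\<lambda>_. 0) = 0" for u by (simp add: Bf_def)
  have P1: "P = (\<lambda>i. 1 * a i + x * b i)" by (simp add: P_def)
  have Ban: "Bf H a n = - x * \<beta>0"
  proof -
    have "Bf H P n = 0" using BP[of n] Tn by (simp add: P_def)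
    moreover have "Bf H P n = 1 * Bf H a n + x * Bf H b n" unfolding P1 by (rule Bf_lin1)
    ultimately have "Bf H a n + x * \<beta>0 = 0" by (simp add: \<beta>0_def)
    then have "Bf H a n = - (x * \<beta>0)" by (simp add: eq_neg_iff_add_eq_0)
    then show ?thesis by simp
  qed
  have ind3: "\<alpha> = 0 \<and> \<beta> = 0 \<and> \<gamma> = 0" if h: "\<forall>i. \<alpha> * a i + \<beta> * b i + \<gamma> * n i = 0" for \<alpha> \<beta> \<gamma>
  proof -
    define w where "w = (\<lambda>i. \<alpha> * a i + \<beta> * b i)"
    have z: "(\<lambda>i. 1 * w i + \<gamma> * n i) = (\<lambda>_. 0)" using h by (auto simp: w_def)
    have "Bf H b (\<lambda>i. 1 * w i + \<gamma> * n i) = 1 * Bf H b w + \<gamma> * Bf H b n" by (rule Bf_lin2)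
    moreover have "Bf H b w = \<alpha> * Bf H b a + \<beta> * Bf H b b" unfolding w_def by (rule Bf_lin2)
    moreover have "Bf H b a = 0" using Bab Bsym[of b a] by simp
    moreover have "Bf H b (\<lambda>i. 1 * w i + \<gamma> * n i) = 0" unfolding z by (rule Bzero)
    ultimately have "\<gamma> * \<beta>0 = 0" using Bbb by (simp add: \<beta>0_def)
    then have g0: "\<gamma> = 0" using b0 by simp
    have "\<forall>i. \<alpha> * a i + \<beta> * b i = 0"
    proof
      fix i show "\<alpha> * a i + \<beta> * b i = 0" using spec[OF h, of i] g0 by simp
    qed
    then have "\<alpha> = 0 \<and> \<beta> = 0" using ab[unfolded lin_indep2_def, rule_format, of \<alpha> \<beta>] by simp
    with g0 show ?thesis by simp
  qed
  have TP: "Tf g P = 0" unfolding P1 Tf_lin using Ta Tb by simp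
  have Tm: "Tf g m = 0" unfolding m_def Tf_lin using Tn Tb by simp
  have BPP: "Bf H P P = 0" using BP[of P] TP by (simp add: P_def)
  have BPm: "Bf H P m = 0" using BP[of m] Tm by (simp add: P_def)
  have Bmm: "Bf H m m = 0"
  proof -
    have "Bf H m m = (2 * \<beta>0) * (2 * \<beta>0) * Bf H n n + 2 * (2 * \<beta>0) * (- \<nu>) * Bf H n b + (- \<nu>) * (- \<nu>) * Bf H b b"
      unfolding m_def by (rule Bf_quad[OF Hs])
    then show ?thesis using Bbb Bsym[of n b] by (simp add: \<beta>0_def \<nu>_def algebra_simps)
  qed
  have Pm_ind: "lin_indep2 P m" unfolding lin_indep2_def
  proof (intro allI impI)
    fix s t assume h: "\<forall>i. s * P i + t * m i = 0"
    have "\<forall>i. s * a i + (s * x - t * \<nu>) * b i + (t * 2 * \<beta>0) * n i = 0"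
      using h by (auto simp: P_def m_def algebra_simps)
    then have "s = 0 \<and> (s * x - t * \<nu>) = 0 \<and> t * 2 * \<beta>0 = 0" by (rule ind3)
    then show "s = 0 \<and> t = 0" using b0 two by simp
  qed
  have m_nz: "nonzero4 m"
  proof (rule ccontr)
    assume "\<not> nonzero4 m"
    then have "\<forall>i. 0 * a i + (- \<nu>) * b i + (2 * \<beta>0) * n i = 0" by (auto simp: nonzero4_def m_def algebra_simps)
    then have "2 * \<beta>0 = 0" by (rule conjunct2[OF conjunct2[OF ind3]])
    then show False using b0 two by simp
  qed
  have m_not: "m \<notin> line_cone a b"
  proof
    assume "m \<in> line_cone a b"
    then obtain s t where "m = (\<lambda>i. s * a i + t * b i)" by (auto simp: line_cone_def)
    note mst = this
    have "\<forall>i. (- s) * a i + (- \<nu> - t) * b i + (2 * \<beta>0) * n i = 0"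
    proof
      fix i
      have "(- s) * a i + (- \<nu> - t) * b i + (2 * \<beta>0) * n i = m i - (s * a i + t * b i)"
        by (simp add: m_def algebra_simps)
      also have "\<dots> = 0" using fun_cong[OF mst, of i] by simp
      finally show "(- s) * a i + (- \<nu> - t) * b i + (2 * \<beta>0) * n i = 0" .
    qed
    then have "2 * \<beta>0 = 0" by (rule conjunct2[OF conjunct2[OF ind3]])
    then show False using b0 two by simp
  qed
  have "m = (\<lambda>i. 0 * P i + 1 * m i)" by simp
  then have m_in: "m \<in> line_cone P m"
    unfolding line_cone_def using m_nz by blast
  have neq: "line_cone a b \<noteq> line_cone P m" using m_not m_in by auto
  have eq: "{z. nonzero4 z \<and> Tf g z = 0 \<and> Bf H z z = 0} = line_cone a b \<union> line_cone P m"
  proof (intro equalityI subsetI)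
    fix z assume "z \<in> {z. nonzero4 z \<and> Tf g z = 0 \<and> Bf H z z = 0}"
    then have nz: "nonzero4 z" and Tz: "Tf g z = 0" and Bz: "Bf H z z = 0" by auto
    have ind3': "\<forall>\<alpha> \<beta> \<gamma>. (\<forall>i. \<alpha> * a i + \<beta> * b i + \<gamma> * n i = 0) \<longrightarrow> \<alpha> = 0 \<and> \<beta> = 0 \<and> \<gamma> = 0"
      by (intro allI impI, rule ind3, assumption)
    obtain \<alpha> \<beta> \<gamma> where zd: "z = (\<lambda>i. \<alpha> * a i + \<beta> * b i + \<gamma> * n i)"
      using ker3[OF gk Ta[unfolded Tf_def] Tb[unfolded Tf_def] Tn[unfolded Tf_def] Tz[unfolded Tf_def] ind3'] by blast
    define w where "w = (\<lambda>i. \<alpha> * a i + \<beta> * b i)"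
    have zw: "z = (\<lambda>i. 1 * w i + \<gamma> * n i)" by (simp add: zd w_def)
    have Bww: "Bf H w w = 0" unfolding w_def Bf_quad[OF Hs] using Baa Bab Bbb by simp
    have Bwn: "Bf H w n = \<alpha> * (- x * \<beta>0) + \<beta> * \<beta>0"
      unfolding w_def Bf_lin1 Ban by (simp add: \<beta>0_def)
    have "Bf H z z = 2 * \<gamma> * Bf H w n + \<gamma> * \<gamma> * \<nu>"
      unfolding zw Bf_quad[OF Hs] using Bww by (simp add: \<nu>_def)
    then have key: "\<gamma> * (2 * (\<beta> - x * \<alpha>) * \<beta>0 + \<gamma> * \<nu>) = 0"
      using Bz Bwn by (simp add: algebra_simps)
    show "z \<in> line_cone a b \<union> line_cone P m"
    proof (cases "\<gamma> = 0")
      case True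
      then have "z = (\<lambda>i. \<alpha> * a i + \<beta> * b i)" using zd by simp
      then show ?thesis using nz by (auto simp: line_cone_def)
    next
      case False
      then have e: "2 * (\<beta> - x * \<alpha>) * \<beta>0 + \<gamma> * \<nu> = 0" using key by simp
      define q where "q = \<gamma> / (2 * \<beta>0)"
      have q2: "q * (2 * \<beta>0) = \<gamma>" using b0 two by (simp add: q_def)
      have "(\<beta> - (\<alpha> * x - q * \<nu>)) * (2 * \<beta>0) = 2 * (\<beta> - x * \<alpha>) * \<beta>0 + (q * (2 * \<beta>0)) * \<nu>"
        by (simp add: algebra_simps)
      also have "\<dots> = 0" using e q2 by simp
      finally have "\<beta> - (\<alpha> * x - q * \<nu>) = 0" using b0 two by simp
      then have bq: "\<beta> = \<alpha> * x - q * \<nu>" by simp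
      have "z = (\<lambda>i. \<alpha> * P i + q * m i)"
      proof
        fix i
        have "\<alpha> * P i + q * m i = \<alpha> * a i + (\<alpha> * x - q * \<nu>) * b i + (q * (2 * \<beta>0)) * n i"
          by (simp add: P_def m_def algebra_simps)
        then show "z i = \<alpha> * P i + q * m i" using zd bq q2 by simp
      qed
      then show ?thesis using nz by (auto simp: line_cone_def)
    qed
  next
    fix z assume "z \<in> line_cone a b \<union> line_cone P m"
    then show "z \<in> {z. nonzero4 z \<and> Tf g z = 0 \<and> Bf H z z = 0}"
    proof
      assume "z \<in> line_cone a b"
      then obtain s t where nz: "nonzero4 z" and zd: "z = (\<lambda>i. s * a i + t * b i)" by (auto simp: line_cone_def)
      have "Tf g z = 0" unfolding zd Tf_lin using Ta Tb by simp
      moreover have "Bf H z z = 0" unfolding zd Bf_quad[OF Hs] using Baa Bab Bbb by simp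
      ultimately show ?thesis using nz by simp
    next
      assume "z \<in> line_cone P m"
      then obtain s t where nz: "nonzero4 z" and zd: "z = (\<lambda>i. s * P i + t * m i)" by (auto simp: line_cone_def)
      have "Tf g z = 0" unfolding zd Tf_lin using TP Tm by simp
      moreover have "Bf H z z = 0" unfolding zd Bf_quad[OF Hs] using BPP BPm Bmm by simp
      ultimately show ?thesis using nz by simp
    qed
  qed
  have "lin_indep2 a b \<and> lin_indep2 P m \<and> line_cone a b \<noteq> line_cone P m \<and>
        {z. nonzero4 z \<and> Tf g z = 0 \<and> Bf H z z = 0} = line_cone a b \<union> line_cone P m"
    using ab Pm_ind neq eq by blast
  then show ?thesis by blast
qed



lemma alg_closed_infinite: "infinite (UNIV :: 'a::alg_closed_field set)"
proof
  assume fin: "finite (UNIV :: 'a set)"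
  define q :: "'a poly" where "q = (\<Prod>c\<in>UNIV. [:- c, 1:]) + 1"
  have dprod: "degree (\<Prod>c\<in>(UNIV::'a set). [:- c, 1:]) = card (UNIV :: 'a set)"
    by (subst degree_prod_sum_eq) auto
  have "card (UNIV :: 'a set) > 0" using fin by (simp add: card_gt_0_iff)
  then have "degree q > 0" unfolding q_def using dprod by (subst degree_add_eq_left) auto
  then obtain x where "poly q x = 0" using alg_closed_imp_poly_has_root by blast
  moreover have "poly (\<Prod>c\<in>(UNIV::'a set). [:- c, 1:]) x = 0"
    by (simp add: poly_prod) (rule prod_zero[OF fin], auto intro!: bexI[of _ x])
  ultimately show False by (simp add: q_def)
qed

lemma poly_all_0_ac:
  fixes p :: "'a::alg_closed_field poly"
  assumes "\<And>x. poly p x = 0" shows "p = 0"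
proof (rule ccontr)
  assume "p \<noteq> 0"
  then have "finite {x. poly p x = 0}" by (rule poly_roots_finite)
  moreover have "{x. poly p x = 0} = UNIV" using assms by auto
  ultimately show False using alg_closed_infinite[where 'a='a] by simp
qed

lemma proj_pt_iff: "w \<in> proj_pt v \<longleftrightarrow> (\<exists>e. e \<noteq> 0 \<and> w = (\<lambda>i. e * v i))"
  unfolding proj_pt_def by blast

lemma proj_scale:
  fixes v :: "4 \<Rightarrow> 'a::field"
  assumes c0: "c \<noteq> 0" shows "proj_pt (\<lambda>i. c * v i) = proj_pt v"
proof (intro equalityI subsetI)
  fix w assume "w \<in> proj_pt (\<lambda>i. c * v i)"
  then obtain e where e: "e \<noteq> 0" "w = (\<lambda>i. e * (c * v i))" unfolding proj_pt_iff by blast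
  have "e * c \<noteq> 0" using e c0 by simp
  moreover have "w = (\<lambda>i. (e * c) * v i)" using e(2) by (simp add: mult.assoc)
  ultimately show "w \<in> proj_pt v" unfolding proj_pt_iff by blast
next
  fix w assume "w \<in> proj_pt v"
  then obtain e where e: "e \<noteq> 0" "w = (\<lambda>i. e * v i)" unfolding proj_pt_iff by blast
  have "e / c \<noteq> 0" using e c0 by simp
  moreover have "w = (\<lambda>i. (e / c) * (c * v i))" using e(2) c0 by simp
  ultimately show "w \<in> proj_pt (\<lambda>i. c * v i)" unfolding proj_pt_iff by blast
qed

lemma char_nz:
  assumes "CHAR('a::field) = 0 \<or> d < CHAR('a)" "0 < k" "k \<le> d"
  shows "(of_nat k :: 'a) \<noteq> 0"
proof
  assume "of_nat k = (0::'a)"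
  then have "CHAR('a) dvd k" by (simp add: of_nat_eq_0_iff_char_dvd)
  show False
  proof (cases "CHAR('a) = 0")
    case True then show False using \<open>CHAR('a) dvd k\<close> assms(2) by simp
  next
    case False
    then have "CHAR('a) \<le> k" using \<open>CHAR('a) dvd k\<close> assms(2) by (intro dvd_imp_le) auto
    then show False using False assms(1,3) by linarith
  qed
qed



lemma tdl_scale:
  fixes f :: "'a::field mpoly4"
  assumes h: "homogeneous4 d f" and c0: "c \<noteq> 0"
  shows "two_distinct_lines f (\<lambda>i. c * P i) = two_distinct_lines f P"
proof -
  have t: "tangent_form f (\<lambda>i. c * P i) z = c ^ (d - 1) * tangent_form f P z" for z
    unfolding tangent_form_def
    by (simp add: eval_scale[OF homog_D[OF h]] sum_distrib_left mult.assoc)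
  have hh: "hessian_form f (\<lambda>i. c * P i) z = c ^ (d - 1 - 1) * hessian_form f P z" for z
    unfolding hessian_form_def
    by (simp add: eval_scale[OF homog_D[OF homog_D[OF h]]] sum_distrib_left mult.assoc)
  have "{z. nonzero4 z \<and> tangent_form f (\<lambda>i. c * P i) z = 0 \<and> hessian_form f (\<lambda>i. c * P i) z = 0}
      = {z. nonzero4 z \<and> tangent_form f P z = 0 \<and> hessian_form f P z = 0}"
    using c0 by (simp add: t hh)
  then show ?thesis unfolding two_distinct_lines_def by simp
qed



lemma lin_indep2D: "lin_indep2 a b \<Longrightarrow> (\<And>i. s * a i + t * b i = 0) \<Longrightarrow> s = 0 \<and> t = 0"
  unfolding lin_indep2_def by blast

lemma smoothD: "smooth_surface f \<Longrightarrow> nonzero4 P \<Longrightarrow> eval4 f P = 0 \<Longrightarrow> \<exists>i. eval4 (pderiv4 i f) P \<noteq> 0"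
  unfolding smooth_surface_def by blast

theorem lemma2p6:
  fixes f :: "'a::alg_closed_field mpoly4" and d :: nat and a b :: "4 \<Rightarrow> 'a"
  assumes "d \<ge> 3"
    and "CHAR('a) = 0 \<or> CHAR('a) > d"
    and "f \<noteq> (\<lambda>_. 0)"
    and "homogeneous4 d f"
    and "smooth_surface f"
    and "lin_indep2 a b"
    and "\<forall>s t. eval4 f (\<lambda>i. s * a i + t * b i) = 0"
  shows "finite {proj_pt P | P. P \<in> line_cone a b \<and> \<not> two_distinct_lines f P}"
proof -
  note h = assms(4)
  note ab = assms(6)
  have ch: "CHAR('a) = 0 \<or> d < CHAR('a)" using assms(2) by auto
  have ch1: "CHAR('a) = 0 \<or> d - 1 < CHAR('a)" using assms(2) by auto
  have hD: "homogeneous4 (d - 1) (pderiv4 i f)" for i by (rule homog_D[OF h])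
  have hDD: "homogeneous4 (d - 1 - 1) (pderiv4 j (pderiv4 i f))" for i j by (rule homog_D[OF hD])
  have finf: "finite {\<alpha>. f \<alpha> \<noteq> 0}" by (rule fin_homog[OF h])
  have finD: "finite {\<alpha>. pderiv4 i f \<alpha> \<noteq> 0}" for i by (rule fin_homog[OF hD])
  have finDD: "finite {\<alpha>. pderiv4 j (pderiv4 i f) \<alpha> \<noteq> 0}" for i j by (rule fin_homog[OF hDD])
  define Q where "Q x = (\<lambda>i. a i + x * b i)" for x
  define p where "p i = Lp a b (pderiv4 i f)" for i
  define W where "W i j = p j * pderiv (p i) - p i * pderiv (p j)" for i j
  define g where "g x = (\<lambda>i. eval4 (pderiv4 i f) (Q x))" for x
  define H where "H x = (\<lambda>i j. eval4 (pderiv4 j (pderiv4 i f)) (Q x))" for x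
  have two: "(2::'a) \<noteq> 0" using char_nz[OF ch, of 2] assms(1) by simp
  have onL: "eval4 f (Q x) = 0" for x
    using assms(7)[rule_format, of 1 x] by (simp add: Q_def)
  have Lf0: "Lp a b f = 0"
    by (rule poly_all_0_ac) (simp add: poly_Lp[OF finf] onL[unfolded Q_def])
  have sumbp: "(\<Sum>i\<in>UNIV. smult (b i) (p i)) = 0"
    using pderiv_Lp[OF finf, of a b] Lf0 by (simp add: p_def)
  have dp: "pderiv (p i) = (\<Sum>j\<in>UNIV. smult (b j) (Lp a b (pderiv4 j (pderiv4 i f))))" for i
    unfolding p_def by (rule pderiv_Lp[OF finD])
  have pev: "poly (p i) x = g x i" for i x by (simp add: p_def poly_Lp[OF finD] Q_def g_def)
  have dpev: "poly (pderiv (p i)) x = (\<Sum>j\<in>UNIV. b j * H x i j)" for i x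
    by (simp add: dp poly_sum poly_Lp[OF finDD] Q_def H_def)
  have Hs: "H x i j = H x j i" for x i j by (simp add: H_def D_comm)
  have nzQ: "nonzero4 (Q x)" for x
  proof (rule ccontr)
    assume "\<not> nonzero4 (Q x)"
    then have "1 * a i + x * b i = 0" for i by (simp add: nonzero4_def Q_def)
    then have "(1::'a) = 0 \<and> x = 0" by (rule lin_indep2D[OF ab])
    then show False by simp
  qed
  have smQ: "\<exists>k. g x k \<noteq> 0" for x
    using smoothD[OF assms(5) nzQ[of x] onL[of x]] unfolding g_def by simp
  have Tb: "Tf (g x) b = 0" for x
  proof -
    have "Tf (g x) b = poly (\<Sum>i\<in>UNIV. smult (b i) (p i)) x"
      by (simp add: poly_sum pev Tf_def mult.commute)
    then show ?thesis using sumbp by simp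
  qed
  have TQ: "Tf (g x) (Q x) = 0" for x
  proof -
    have "Tf (g x) (Q x) = (\<Sum>i\<in>UNIV. Q x i * eval4 (pderiv4 i f) (Q x))"
      by (simp add: Tf_def g_def mult.commute)
    also have "\<dots> = of_nat d * eval4 f (Q x)" by (rule euler[OF h])
    finally show ?thesis using onL by simp
  qed
  have Q1: "Q x = (\<lambda>i. 1 * a i + x * b i)" for x by (simp add: Q_def)
  have Ta: "Tf (g x) a = 0" for x
    using TQ[of x] Tb[of x] unfolding Q1 Tf_lin by simp
  have BvQ: "Bf (H x) v (Q x) = of_nat (d - 1) * Tf (g x) v" for x v
  proof -
    have e: "(\<Sum>j\<in>UNIV. Q x j * H x i j) = of_nat (d - 1) * g x i" for i
      unfolding H_def g_def by (rule euler[OF hD])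
    have "Bf (H x) v (Q x) = (\<Sum>i\<in>UNIV. v i * (\<Sum>j\<in>UNIV. Q x j * H x i j))"
      unfolding Bf_def by (simp add: sum_distrib_left mult_ac)
    also have "\<dots> = of_nat (d - 1) * Tf (g x) v"
      by (simp add: e Tf_def sum_distrib_left mult_ac)
    finally show ?thesis .
  qed
  have Bbb: "Bf (H x) b b = 0" for x
  proof -
    have "Bf (H x) b b = (\<Sum>i\<in>UNIV. b i * poly (pderiv (p i)) x)"
      unfolding Bf_def dpev by (simp add: sum_distrib_left mult_ac)
    also have "\<dots> = poly (pderiv (\<Sum>i\<in>UNIV. smult (b i) (p i))) x"
      by (simp add: pderiv_sum' pderiv_smult poly_sum)
    finally show ?thesis using sumbp by simp
  qed
  have Bba: "Bf (H x) b a = 0" for x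
  proof -
    have "Bf (H x) b (Q x) = 0" using BvQ[of x b] Tb[of x] by simp
    moreover have "Bf (H x) b (Q x) = 1 * Bf (H x) b a + x * Bf (H x) b b" unfolding Q1 by (rule Bf_lin2)
    ultimately show ?thesis using Bbb[of x] by simp
  qed
  have Bab: "Bf (H x) a b = 0" for x using Bba[of x] Bf_sym[of "H x" a b] Hs by simp
  have Baa: "Bf (H x) a a = 0" for x
  proof -
    have "Bf (H x) a (Q x) = 0" using BvQ[of x a] Ta[of x] by simp
    moreover have "Bf (H x) a (Q x) = 1 * Bf (H x) a a + x * Bf (H x) a b" unfolding Q1 by (rule Bf_lin2)
    ultimately show ?thesis using Bab[of x] by simp
  qed
  define e where "e k = (\<lambda>l::4. if l = k then (1::'a) else 0)" for k
  have Bbe: "Bf (H x) b (e k) = poly (pderiv (p k)) x" for x k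
  proof -
    have "Bf (H x) b (e k) = (\<Sum>i\<in>UNIV. H x i k * b i)"
      unfolding Bf_def e_def by (simp add: if_distrib cong: if_cong)
    then show ?thesis by (simp add: dpev Hs mult.commute)
  qed
  have Te: "Tf (g x) (e k) = g x k" for x k
    unfolding Tf_def e_def by (simp add: if_distrib cong: if_cong)
  have good: "two_distinct_lines f (Q x)" if Wx: "poly (W i j) x \<noteq> 0" for i j x
  proof -
    obtain k where gk: "g x k \<noteq> 0" using smQ by blast
    define n where "n = (\<lambda>l. g x j * e i l + (- g x i) * e j l)"
    have Tn: "Tf (g x) n = 0" unfolding n_def Tf_lin Te by simp
    have Bbn: "Bf (H x) b n = poly (W i j) x"
      unfolding n_def Bf_lin2 Bbe by (simp add: W_def pev)
    have BP: "Bf (H x) (\<lambda>i. a i + x * b i) v = of_nat (d - 1) * Tf (g x) v" for v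
      using BvQ[of x v] Bf_sym[of "H x" v "Q x"] Hs by (simp add: Q_def)
    have LA: "\<exists>a1 b1 a2 b2. lin_indep2 a1 b1 \<and> lin_indep2 a2 b2 \<and> line_cone a1 b1 \<noteq> line_cone a2 b2 \<and>
        {z. nonzero4 z \<and> Tf (g x) z = 0 \<and> Bf (H x) z z = 0} = line_cone a1 b1 \<union> line_cone a2 b2"
      by (rule two_lines_LA[OF two gk Hs ab Ta Tb Baa Bab Bbb Tn _ BP]) (use Bbn Wx in simp)
    have "{z. nonzero4 z \<and> tangent_form f (Q x) z = 0 \<and> hessian_form f (Q x) z = 0}
        = {z. nonzero4 z \<and> Tf (g x) z = 0 \<and> Bf (H x) z z = 0}"
      by (simp add: tangent_form_def hessian_form_def Tf_def Bf_def g_def H_def)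
    then show ?thesis using LA unfolding two_distinct_lines_def by simp
  qed
  have Wnz: "\<exists>i j. W i j \<noteq> 0"
  proof (rule ccontr)
    assume "\<not> (\<exists>i j. W i j \<noteq> 0)"
    then have W0: "W i j = 0" for i j by simp
    have nzb: "nonzero4 b"
    proof (rule ccontr)
      assume "\<not> nonzero4 b"
      then have "0 * a i + 1 * b i = 0" for i by (simp add: nonzero4_def)
      then have "(0::'a) = 0 \<and> (1::'a) = 0" by (rule lin_indep2D[OF ab])
      then show False by simp
    qed
    have fb: "eval4 f b = 0" using assms(7)[rule_format, of 0 1] by simp
    obtain i0 where i0: "eval4 (pderiv4 i0 f) b \<noteq> 0"
      using smoothD[OF assms(5) nzb fb] by blast
    have dc: "degree (p i0) \<le> d - 1 \<and> coeff (p i0) (d - 1) = eval4 (pderiv4 i0 f) b"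
      unfolding p_def by (rule Lp_coeff[OF hD])
    have p0: "p i0 \<noteq> 0" using dc i0 by auto
    have "d - 1 \<le> degree (p i0)" using dc i0 by (intro le_degree) simp
    then have "degree (p i0) > 0" using assms(1) by simp
    then obtain x0 where x0: "poly (p i0) x0 = 0" using alg_closed_imp_poly_has_root by blast
    have "g x0 k = 0" for k
    proof -
      have dk: "degree (p k) \<le> d - 1" unfolding p_def using Lp_coeff[OF hD] by blast
      have "p i0 * pderiv (p k) - p k * pderiv (p i0) = 0" using W0[of k i0] by (simp add: W_def)
      then obtain c where "p k = smult c (p i0)"
        using wronsk_dep[OF dk conjunct1[OF dc] ch1 _ p0] by blast
      then have "poly (p k) x0 = 0" using x0 by simp
      then show ?thesis using pev by simp
    qed
    then show False using smQ[of x0] by simp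
  qed
  then obtain i j where Wij: "W i j \<noteq> 0" by blast
  define R where "R = {x. poly (W i j) x = 0}"
  have finR: "finite R" unfolding R_def by (rule poly_roots_finite[OF Wij])
  have sub: "{proj_pt P | P. P \<in> line_cone a b \<and> \<not> two_distinct_lines f P}
      \<subseteq> insert (proj_pt b) ((\<lambda>x. proj_pt (Q x)) ` R)"
  proof
    fix X assume "X \<in> {proj_pt P | P. P \<in> line_cone a b \<and> \<not> two_distinct_lines f P}"
    then obtain P where XP: "X = proj_pt P" and PL: "P \<in> line_cone a b" and nt: "\<not> two_distinct_lines f P"
      by auto
    from PL obtain s t where nzP: "nonzero4 P" and Pd: "P = (\<lambda>i. s * a i + t * b i)"
      unfolding line_cone_def by auto
    show "X \<in> insert (proj_pt b) ((\<lambda>x. proj_pt (Q x)) ` R)"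
    proof (cases "s = 0")
      case True
      then have Pt: "P = (\<lambda>i. t * b i)" using Pd by simp
      have "t \<noteq> 0" using nzP Pt by (auto simp: nonzero4_def)
      then have "X = proj_pt b" using XP Pt proj_scale by simp
      then show ?thesis by simp
    next
      case False
      define x where "x = t / s"
      have PQ: "P = (\<lambda>i. s * Q x i)" using Pd False by (auto simp: Q_def x_def algebra_simps)
      have "X = proj_pt (Q x)" using XP PQ proj_scale False by simp
      moreover have "\<not> two_distinct_lines f (Q x)" using nt PQ tdl_scale[OF h False] by simp
      then have "x \<in> R" using good[of i j x] unfolding R_def by auto
      ultimately have "X \<in> (\<lambda>x. proj_pt (Q x)) ` R" by (intro image_eqI)
      then show ?thesis by (rule insertI2)
    qed
  qed
  show ?thesis by (rule finite_subset[OF sub]) (use finR in simp)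
qed


end
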